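(* Let $s,n,k$ be positive integers, $\Gamma=\mathbb{Z}_{sn}\mathbin{\mathrm{wr}}\mathbb{Z}^k$ and $G=\mathbb{Z}_n\mathbin{\mathrm{wr}}\mathbb{Z}^k$, and let $\Pi\colon\Gamma\to G$ be the homomorphism reducing coefficients mod $n$ (defined in the context). Then $\ker\Pi$ is a completely invariant subgroup of $\Gamma$, i.e. it is mapped into itself by every endomorphism of $\Gamma$.
   Context: For a positive integer $m$, $\mathbb{Z}_m\mathbin{\mathrm{wr}}\mathbb{Z}^k=\bigoplus_{x\in\mathbb{Z}^k}(\mathbb{Z}_m)_x\rtimes_\alpha\mathbb{Z}^k$ is the restricted wreath product, where $\alpha(z)$ maps $(\mathbb{Z}_m)_x$ onto $(\mathbb{Z}_m)_{z+x}$. Let $\Sigma$, $\Omega$ denote the torsion subgroups $\bigoplus_x(\mathbb{Z}_{sn})_x$ of $\Gamma$ and $\bigoplus_x(\mathbb{Z}_n)_x$ of $G$, with generators $\Delta_x$ of $(\mathbb{Z}_{sn})_x$ and $\delta_x$ of $(\mathbb{Z}_n)_x$. Define $\pi\colon\Sigma\to\Omega$ by $\pi(k_1\Delta_{x_1}+\dots+k_l\Delta_{x_l})=(k_1\bmod n)\delta_{x_1}+\dots+(k_l\bmod n)\delta_{x_l}$, and $\Pi(\sigma,z)=(\pi(\sigma),z)$ for $\sigma\in\Sigma$, $z\in\mathbb{Z}^k$. *)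

theory Defs
  imports "HOL-Algebra.Algebra"
begin

definition lattice :: "nat \<Rightarrow> (nat \<Rightarrow> int) set" where
  "lattice k = {z. \<forall>i\<ge>k. z i = 0}"

definition vadd :: "(nat \<Rightarrow> int) \<Rightarrow> (nat \<Rightarrow> int) \<Rightarrow> (nat \<Rightarrow> int)" where
  "vadd z w = (\<lambda>i. z i + w i)"

definition vsub :: "(nat \<Rightarrow> int) \<Rightarrow> (nat \<Rightarrow> int) \<Rightarrow> (nat \<Rightarrow> int)" where
  "vsub z w = (\<lambda>i. z i - w i)"

text \<open>Finitely supported functions Z^k -> Z_m (residues represented in {0..<m}),
  i.e. the direct sum of copies (Z_m)_x over x in Z^k.\<close>
definition fin_sup :: "int \<Rightarrow> nat \<Rightarrow> ((nat \<Rightarrow> int) \<Rightarrow> int) set" where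
  "fin_sup m k = {\<sigma>. (\<forall>x. 0 \<le> \<sigma> x \<and> \<sigma> x < m) \<and> (\<forall>x. \<sigma> x \<noteq> 0 \<longrightarrow> x \<in> lattice k)
                      \<and> finite {x. \<sigma> x \<noteq> 0}}"

text \<open>Restricted wreath product Z_m wr Z^k = (direct sum) \<rtimes>_alpha Z^k,
  where alpha(z) maps (Z_m)_x onto (Z_m)_(z+x), i.e. (alpha(z) tau)(x) = tau(x - z).\<close>
definition wreath :: "int \<Rightarrow> nat \<Rightarrow> (((nat \<Rightarrow> int) \<Rightarrow> int) \<times> (nat \<Rightarrow> int)) monoid" where
  "wreath m k = \<lparr> carrier = fin_sup m k \<times> lattice k,
     monoid.mult = (\<lambda>a b. ((\<lambda>x. (fst a x + fst b (vsub x (snd a))) mod m), vadd (snd a) (snd b))),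
     monoid.one = ((\<lambda>x. 0), (\<lambda>i. 0)) \<rparr>"

definition Pi_red :: "int \<Rightarrow> ((nat \<Rightarrow> int) \<Rightarrow> int) \<times> (nat \<Rightarrow> int)
                       \<Rightarrow> ((nat \<Rightarrow> int) \<Rightarrow> int) \<times> (nat \<Rightarrow> int)" where
  "Pi_red n = (\<lambda>(\<sigma>, z). (\<lambda>x. \<sigma> x mod n, z))"

end

theory Submission
  imports Defs
begin

lemma wr_pow_snd:
  "snd (pow (wreath m k) a j) = (\<lambda>i. int j * snd a i)"
  by (induct j) (auto simp: nat_pow_def wreath_def vadd_def algebra_simps)

lemma wr_pow_fst:
  assumes "snd a = (\<lambda>i. 0)"
  shows "fst (pow (wreath m k) a j) = (\<lambda>x. (int j * fst a x) mod m)"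
proof (induct j)
  case 0
  then show ?case by (simp add: nat_pow_def wreath_def)
next
  case (Suc j)
  have sn: "snd (pow (wreath m k) a j) = (\<lambda>i. 0)" using wr_pow_snd[of m k a j] assms by simp
  have vs: "\<And>x. vsub x (\<lambda>i. 0) = x" by (simp add: vsub_def)
  show ?case
    using Suc sn
    by (auto simp: nat_pow_def wreath_def vs mod_add_right_eq algebra_simps)
qed

lemma wr_kernel_iff:
  "a \<in> kernel (wreath m k) (wreath n k) (Pi_red n) \<longleftrightarrow>
     a \<in> carrier (wreath m k) \<and> snd a = (\<lambda>i. 0) \<and> (\<forall>x. fst a x mod n = 0)"
  by (cases a) (auto simp: kernel_def Pi_red_def wreath_def fun_eq_iff)

lemma wr_idem:
  assumes "m > 0" "e \<in> carrier (wreath m k)" "e \<otimes>\<^bsub>wreath m k\<^esub> e = e"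
  shows "e = \<one>\<^bsub>wreath m k\<^esub>"
proof -
  obtain \<sigma> z where e: "e = (\<sigma>, z)" by (cases e)
  have r: "\<And>x. 0 \<le> \<sigma> x \<and> \<sigma> x < m" using assms(2) e by (auto simp: wreath_def fin_sup_def)
  have z: "vadd z z = z" using assms(3) e by (simp add: wreath_def)
  have "\<And>i. z i + z i = z i" using fun_cong[OF z[unfolded vadd_def]] by simp
  hence z0: "z = (\<lambda>i. 0)" by (simp add: fun_eq_iff)
  have "\<And>x. (\<sigma> x + \<sigma> x) mod m = \<sigma> x"
  proof -
    fix x
    have "(\<lambda>x. (\<sigma> x + \<sigma> (vsub x z)) mod m) = \<sigma>" using assms(3) e by (simp add: wreath_def)
    moreover have "vsub x z = x" using z0 by (simp add: vsub_def)
    ultimately show "(\<sigma> x + \<sigma> x) mod m = \<sigma> x" by (metis)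
  qed
  hence "\<And>x. \<sigma> x = 0"
  proof -
    fix x
    have h: "(\<sigma> x + \<sigma> x) mod m = \<sigma> x" by fact
    have "0 \<le> \<sigma> x" "\<sigma> x < m" using r by auto
    have "(\<sigma> x + \<sigma> x) mod m = \<sigma> x mod m" using h \<open>0 \<le> \<sigma> x\<close> \<open>\<sigma> x < m\<close> by simp
    hence "m dvd (\<sigma> x + \<sigma> x) - \<sigma> x" by (simp only: mod_eq_dvd_iff)
    hence md: "m dvd \<sigma> x" by simp
    show "\<sigma> x = 0"
    proof (rule ccontr)
      assume "\<sigma> x \<noteq> 0"
      hence "0 < \<sigma> x" using \<open>0 \<le> \<sigma> x\<close> by simp
      hence "m \<le> \<sigma> x" using md zdvd_imp_le by blast
      thus False using \<open>\<sigma> x < m\<close> by simp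
    qed
  qed
  then show ?thesis using e z0 by (simp add: wreath_def fun_eq_iff)
qed

theorem lemma3p1:
  fixes s n :: int and k :: nat
  assumes "s > 0" and "n > 0" and "k > 0"
  shows "subgroup (kernel (wreath (s * n) k) (wreath n k) (Pi_red n)) (wreath (s * n) k)
       \<and> (\<forall>h \<in> hom (wreath (s * n) k) (wreath (s * n) k).
            h ` kernel (wreath (s * n) k) (wreath n k) (Pi_red n)
              \<subseteq> kernel (wreath (s * n) k) (wreath n k) (Pi_red n))"
proof -
  define m where "m = s * n"
  define W where "W = wreath m k"
  define K where "K = kernel W (wreath n k) (Pi_red n)"
  have m0: "m > 0" using assms unfolding m_def by simp
  have nm: "n dvd m" unfolding m_def by simp
  have Kiff: "\<And>\<sigma> z. (\<sigma>, z) \<in> K \<longleftrightarrow> (\<sigma>, z) \<in> carrier W \<and> z = (\<lambda>i. 0) \<and> (\<forall>x. n dvd \<sigma> x)"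
    unfolding K_def W_def using wr_kernel_iff by (simp add: dvd_eq_mod_eq_0)
  have carr: "\<And>\<sigma>. (\<sigma>, (\<lambda>i. 0)) \<in> carrier W \<longleftrightarrow> \<sigma> \<in> fin_sup m k"
    by (simp add: W_def wreath_def lattice_def)
  have vs: "\<And>x. vsub x (\<lambda>i. 0) = x" by (simp add: vsub_def)
  have va: "vadd (\<lambda>i. 0) (\<lambda>i. 0) = (\<lambda>i. 0)" by (simp add: vadd_def)
  have mulK: "\<And>\<sigma> \<tau>. (\<sigma>, (\<lambda>i. 0)) \<otimes>\<^bsub>W\<^esub> (\<tau>, (\<lambda>i. 0)) = ((\<lambda>x. (\<sigma> x + \<tau> x) mod m), (\<lambda>i. 0))"
    by (simp add: W_def wreath_def vs va)
  have one: "\<one>\<^bsub>W\<^esub> = ((\<lambda>x. 0), (\<lambda>i. 0))" by (simp add: W_def wreath_def)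
  have fs: "\<And>\<sigma> \<tau> f. \<sigma> \<in> fin_sup m k \<Longrightarrow> \<tau> \<in> fin_sup m k \<Longrightarrow> (\<And>x. f x = 0 \<or> \<sigma> x \<noteq> 0 \<or> \<tau> x \<noteq> 0)
      \<Longrightarrow> (\<And>x. 0 \<le> f x \<and> f x < m) \<Longrightarrow> f \<in> fin_sup m k"
  proof -
    fix \<sigma> \<tau> f :: "(nat \<Rightarrow> int) \<Rightarrow> int"
    assume a: "\<sigma> \<in> fin_sup m k" "\<tau> \<in> fin_sup m k" "\<And>x. f x = 0 \<or> \<sigma> x \<noteq> 0 \<or> \<tau> x \<noteq> 0"
      "\<And>x. 0 \<le> f x \<and> f x < m"
    have sub: "{x. f x \<noteq> 0} \<subseteq> {x. \<sigma> x \<noteq> 0} \<union> {x. \<tau> x \<noteq> 0}" using a(3) by auto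
    have "finite ({x. \<sigma> x \<noteq> 0} \<union> {x. \<tau> x \<noteq> 0})" using a(1,2) by (simp add: fin_sup_def)
    hence "finite {x. f x \<noteq> 0}" using sub finite_subset by blast
    moreover have l1: "\<forall>x. \<sigma> x \<noteq> 0 \<longrightarrow> x \<in> lattice k" "\<forall>x. \<tau> x \<noteq> 0 \<longrightarrow> x \<in> lattice k"
      using a(1,2) by (simp_all add: fin_sup_def)
    moreover have "\<forall>x. f x \<noteq> 0 \<longrightarrow> x \<in> lattice k" using l1 a(3) by blast
    ultimately show "f \<in> fin_sup m k" using a(4) by (simp add: fin_sup_def)
  qed
  have zfs: "(\<lambda>x. 0) \<in> fin_sup m k" using m0 by (simp add: fin_sup_def)
  have oneK: "\<one>\<^bsub>W\<^esub> \<in> K" unfolding one Kiff carr using zfs by simp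
  have mK: "\<And>a b. a \<in> K \<Longrightarrow> b \<in> K \<Longrightarrow> a \<otimes>\<^bsub>W\<^esub> b \<in> K"
  proof -
    fix a b assume a: "a \<in> K" and b: "b \<in> K"
    obtain \<sigma> z where az: "a = (\<sigma>, z)" by (cases a)
    obtain \<tau> w where bw: "b = (\<tau>, w)" by (cases b)
    have A: "z = (\<lambda>i. 0)" "\<sigma> \<in> fin_sup m k" "\<forall>x. n dvd \<sigma> x" using a az Kiff carr by auto
    have B: "w = (\<lambda>i. 0)" "\<tau> \<in> fin_sup m k" "\<forall>x. n dvd \<tau> x" using b bw Kiff carr by auto
    have f: "(\<lambda>x. (\<sigma> x + \<tau> x) mod m) \<in> fin_sup m k"
      by (rule fs[OF A(2) B(2)]) (use m0 in auto)
    have d: "\<forall>x. n dvd (\<sigma> x + \<tau> x) mod m" using A(3) B(3) dvd_mod[OF _ nm] by simp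
    show "a \<otimes>\<^bsub>W\<^esub> b \<in> K" unfolding az bw A(1) B(1) mulK Kiff carr using f d by simp
  qed
  have invK: "\<And>a. a \<in> K \<Longrightarrow> inv\<^bsub>W\<^esub> a \<in> K"
  proof -
    fix a assume a: "a \<in> K"
    obtain \<sigma> z where az: "a = (\<sigma>, z)" by (cases a)
    have A: "z = (\<lambda>i. 0)" "\<sigma> \<in> fin_sup m k" "\<forall>x. n dvd \<sigma> x" using a az Kiff carr by auto
    define \<beta> where "\<beta> = (\<lambda>x. (- \<sigma> x) mod m)"
    have bfs: "\<beta> \<in> fin_sup m k" unfolding \<beta>_def by (rule fs[OF A(2) A(2)]) (use m0 in auto)
    have bK: "(\<beta>, (\<lambda>i. 0)) \<in> K" unfolding Kiff carr using bfs A(3) dvd_mod[OF _ nm] unfolding \<beta>_def by simp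
    have r: "\<And>x. 0 \<le> \<sigma> x \<and> \<sigma> x < m" using A(2) by (simp add: fin_sup_def)
    have "inv\<^bsub>W\<^esub> a = (\<beta>, (\<lambda>i. 0))"
      unfolding m_inv_def
    proof (rule the_equality)
      show "(\<beta>, \<lambda>i. 0) \<in> carrier W \<and> a \<otimes>\<^bsub>W\<^esub> (\<beta>, \<lambda>i. 0) = \<one>\<^bsub>W\<^esub> \<and> (\<beta>, \<lambda>i. 0) \<otimes>\<^bsub>W\<^esub> a = \<one>\<^bsub>W\<^esub>"
        unfolding az A(1) mulK one using bfs carr
        by (simp add: \<beta>_def fun_eq_iff mod_add_right_eq mod_add_left_eq)
    next
      fix y assume y: "y \<in> carrier W \<and> a \<otimes>\<^bsub>W\<^esub> y = \<one>\<^bsub>W\<^esub> \<and> y \<otimes>\<^bsub>W\<^esub> a = \<one>\<^bsub>W\<^esub>"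
      obtain \<tau> w where yw: "y = (\<tau>, w)" by (cases y)
      have e: "a \<otimes>\<^bsub>W\<^esub> y = \<one>\<^bsub>W\<^esub>" using y by simp
      have "vadd z w = (\<lambda>i. 0)" using e unfolding az yw one by (simp add: W_def wreath_def)
      hence w0: "w = (\<lambda>i. 0)" using A(1) by (simp add: vadd_def)
      have tfs: "\<tau> \<in> fin_sup m k" using y yw w0 carr by simp
      have "\<And>x. (\<sigma> x + \<tau> x) mod m = 0"
        using e unfolding az yw A(1) w0 mulK one by (simp add: fun_eq_iff)
      hence "\<And>x. \<tau> x = \<beta> x"
      proof -
        fix x assume h: "\<And>x. (\<sigma> x + \<tau> x) mod m = 0"
        have "0 \<le> \<tau> x \<and> \<tau> x < m" using tfs by (simp add: fin_sup_def)
        hence "\<tau> x = \<tau> x mod m" by simp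
        also have "\<dots> = ((\<sigma> x + \<tau> x) - \<sigma> x) mod m" by simp
        also have "\<dots> = ((\<sigma> x + \<tau> x) mod m - \<sigma> x) mod m" by (simp only: mod_diff_left_eq)
        also have "\<dots> = (- \<sigma> x) mod m" using h[of x] by simp
        finally show "\<tau> x = \<beta> x" unfolding \<beta>_def .
      qed
      then show "y = (\<beta>, \<lambda>i. 0)" using yw w0 by (simp add: fun_eq_iff)
    qed
    then show "inv\<^bsub>W\<^esub> a \<in> K" using bK by simp
  qed
  have KsubW: "K \<subseteq> carrier W" unfolding K_def kernel_def by auto
  have sg: "subgroup K W"
    by (rule subgroup.intro) (use KsubW mK oneK invK in auto)
  have hK: "h ` K \<subseteq> K" if h: "h \<in> hom W W" for h
  proof
    fix b assume "b \<in> h ` K"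
    then obtain a where aK: "a \<in> K" and ba: "b = h a" by auto
    have hc: "\<And>x. x \<in> carrier W \<Longrightarrow> h x \<in> carrier W" using h unfolding hom_def Pi_def by blast
    have hm: "\<And>x y. x \<in> carrier W \<Longrightarrow> y \<in> carrier W \<Longrightarrow> h (x \<otimes>\<^bsub>W\<^esub> y) = h x \<otimes>\<^bsub>W\<^esub> h y"
      using h by (simp add: hom_def)
    have oneW: "\<one>\<^bsub>W\<^esub> \<in> carrier W" using oneK KsubW by auto
    have "\<one>\<^bsub>W\<^esub> \<otimes>\<^bsub>W\<^esub> \<one>\<^bsub>W\<^esub> = \<one>\<^bsub>W\<^esub>" unfolding one by (simp add: W_def wreath_def vs va)
    hence "h \<one>\<^bsub>W\<^esub> \<otimes>\<^bsub>W\<^esub> h \<one>\<^bsub>W\<^esub> = h \<one>\<^bsub>W\<^esub>" using hm[OF oneW oneW] by simp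
    hence h1: "h \<one>\<^bsub>W\<^esub> = \<one>\<^bsub>W\<^esub>" using wr_idem[OF m0, of "h \<one>\<^bsub>W\<^esub>" k] hc[OF oneW]
      unfolding W_def by simp
    have powK: "pow W a j \<in> K" for j :: nat
    proof (induct j)
      case 0 then show ?case using oneK by (simp add: nat_pow_def)
    next
      case (Suc j)
      have "pow W a (Suc j) = pow W a j \<otimes>\<^bsub>W\<^esub> a" by (simp add: nat_pow_def)
      then show ?case using mK[OF Suc aK] by simp
    qed
    have hpow: "h (pow W a j) = pow W (h a) j" for j :: nat
    proof (induct j)
      case 0 then show ?case using h1 by (simp add: nat_pow_def)
    next
      case (Suc j)
      have "pow W a (Suc j) = pow W a j \<otimes>\<^bsub>W\<^esub> a" by (simp add: nat_pow_def)
      hence "h (pow W a (Suc j)) = h (pow W a j) \<otimes>\<^bsub>W\<^esub> h a"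
        using hm[OF subsetD[OF KsubW powK[of j]] subsetD[OF KsubW aK]] by simp
      also have "\<dots> = pow W (h a) (Suc j)" using Suc by (simp add: nat_pow_def)
      finally show ?case .
    qed
    obtain \<sigma> z where az: "a = (\<sigma>, z)" by (cases a)
    have A: "z = (\<lambda>i. 0)" "\<forall>x. n dvd \<sigma> x" using aK az Kiff by auto
    have "fst (pow W a (nat s)) = (\<lambda>x. (s * \<sigma> x) mod m)"
      unfolding W_def using wr_pow_fst[of a m k "nat s"] az A(1) assms(1) by simp
    also have "\<dots> = (\<lambda>x. 0)" using A(2) unfolding m_def by (auto simp: fun_eq_iff)
    finally have f1: "fst (pow W a (nat s)) = (\<lambda>x. 0)" .
    have s1: "snd (pow W a (nat s)) = (\<lambda>i. 0)"
      unfolding W_def using wr_pow_snd[of m k a "nat s"] az A(1) by simp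
    have "pow W a (nat s) = \<one>\<^bsub>W\<^esub>" using f1 s1 one by (simp add: prod_eq_iff)
    hence P: "pow W b (nat s) = \<one>\<^bsub>W\<^esub>" using hpow[of "nat s"] h1 ba by simp
    have bW: "b \<in> carrier W" using hc[OF subsetD[OF KsubW aK]] ba by simp
    obtain \<tau> w where bw: "b = (\<tau>, w)" by (cases b)
    have "snd (pow W b (nat s)) = (\<lambda>i. s * w i)"
      unfolding W_def using wr_pow_snd[of m k b "nat s"] bw assms(1) by simp
    hence "(\<lambda>i. s * w i) = (\<lambda>i. 0)" using P one by simp
    hence w0: "w = (\<lambda>i. 0)" using assms(1) by (simp add: fun_eq_iff)
    have "fst (pow W b (nat s)) = (\<lambda>x. (s * \<tau> x) mod m)"
      unfolding W_def using wr_pow_fst[of b m k "nat s"] bw w0 assms(1) by simp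
    hence "\<And>x. (s * \<tau> x) mod (s * n) = 0" using P one unfolding m_def by (auto simp: fun_eq_iff)
    hence "\<And>x. n dvd \<tau> x" using assms(1) by (simp add: dvd_eq_mod_eq_0)
    then show "b \<in> K" using bW bw w0 Kiff by simp
  qed
  show ?thesis using sg hK unfolding K_def W_def m_def by blast
qed

end
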